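(* Let $\mathcal{M}_0$ be the set of all probability distributions on $\mathbb{R}$ and $T:\mathcal{M}_0\to\mathcal{M}_0$. (i) $T\circ T^u=T^u\circ T$ for every increasing left-continuous $u:\mathbb{R}\to\mathbb{R}$ if and only if $T=T_d$ for some right-continuous $d\in\widehat{\mathcal{F}_D}$. (ii) $T\circ T_d=T_d\circ T$ for every right-continuous $d\in\widehat{\mathcal{F}_D}$ if and only if $T=T^u$ for some increasing left-continuous $u:\mathbb{R}\to\mathbb{R}$.
   Context: Increasing means non-decreasing. $\widehat{\mathcal{F}_D}$ is the set of increasing functions $d:[0,1]\to[0,1]$ with $d(0)=\lim_{x\downarrow0}d(x)=0$ and $d(1)=\lim_{x\uparrow1}d(x)=1$. For such $d$, $T_d:\mathcal{M}_0\to\mathcal{M}_0$ is $T_d(F)(x)=\lim_{y\downarrow x}d(F(y))$ (distributions identified with cdfs). For increasing $u$, $T^u(F)=F\circ u^{-1}$ is the distribution of $u(X)$ when $X\sim F$. *)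

theory Defs
  imports "HOL-Analysis.Analysis"
begin

text \<open>Probability distributions on the reals, identified with their cdfs.\<close>
definition M0 :: "(real \<Rightarrow> real) set" where
  "M0 = {F. mono F \<and> (\<forall>x. continuous (at_right x) F)
            \<and> (F \<longlongrightarrow> 0) at_bot \<and> (F \<longlongrightarrow> 1) at_top}"

text \<open>The class of distortion functions (values outside [0,1] are irrelevant).\<close>
definition FD_hat :: "(real \<Rightarrow> real) set" where
  "FD_hat = {d. (\<forall>x\<in>{0..1}. d x \<in> {0..1}) \<and> mono_on {0..1} d
             \<and> d 0 = 0 \<and> (d \<longlongrightarrow> 0) (at_right 0)
             \<and> d 1 = 1 \<and> (d \<longlongrightarrow> 1) (at_left 1)}"

definition right_cont_on01 :: "(real \<Rightarrow> real) \<Rightarrow> bool" where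
  "right_cont_on01 d \<longleftrightarrow> (\<forall>x\<in>{0..<1}. continuous (at_right x) d)"

definition Td :: "(real \<Rightarrow> real) \<Rightarrow> (real \<Rightarrow> real) \<Rightarrow> (real \<Rightarrow> real)" where
  "Td d F = (\<lambda>x. Lim (at_right x) (\<lambda>y. d (F y)))"

text \<open>T^u(F): cdf of u(X) where X has cdf F, i.e. x \<mapsto> P_F(u \<le> x).\<close>
definition Tu :: "(real \<Rightarrow> real) \<Rightarrow> (real \<Rightarrow> real) \<Rightarrow> (real \<Rightarrow> real)" where
  "Tu u F = (\<lambda>x. measure (interval_measure F) {y. u y \<le> x})"

definition incr_left_cont :: "(real \<Rightarrow> real) \<Rightarrow> bool" where
  "incr_left_cont u \<longleftrightarrow> mono u \<and> (\<forall>x. continuous (at_left x) u)"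

end

theory Submission
  imports Defs "HOL-Probability.Distribution_Functions"
begin

lemma M0_D:
  assumes "F \<in> M0"
  shows "mono F" "\<And>x. continuous (at_right x) F" "(F \<longlongrightarrow> 0) at_bot" "(F \<longlongrightarrow> 1) at_top"
  using assms by (auto simp: M0_def)

lemma M0_bounds:
  assumes "F \<in> M0"
  shows "0 \<le> F x" "F x \<le> 1"
proof -
  have m: "mono F" using M0_D[OF assms] by auto
  show "0 \<le> F x"
    using M0_D(3)[OF assms] by (rule tendsto_upperbound)
      (auto simp: eventually_at_bot_linorder intro!: exI[of _ x] monoD[OF m])
  show "F x \<le> 1"
    using M0_D(4)[OF assms] by (rule tendsto_lowerbound)
      (auto simp: eventually_at_top_linorder intro!: exI[of _ x] monoD[OF m])
qed

lemma M0_dist: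
  assumes "F \<in> M0"
  shows "real_distribution (interval_measure F)"
    "\<And>x. measure (interval_measure F) {..x} = F x"
  using M0_D[OF assms] real_distribution_interval_measure[of F] measure_interval_measure_Iic[of F]
  by (auto simp: mono_def)

lemma cdf_M0: "real_distribution M \<Longrightarrow> cdf M \<in> M0"
  unfolding M0_def
  by (auto simp: mono_def finite_borel_measure.cdf_nondecreasing finite_borel_measure.cdf_is_right_cont
      real_distribution.finite_borel_measure_M finite_borel_measure.cdf_lim_at_bot
      real_distribution.cdf_lim_at_top_prob)

lemma Tu_cdf:
  assumes "F \<in> M0" "mono u"
  shows "Tu u F = cdf (distr (interval_measure F) borel u)"
proof -
  have um: "u \<in> borel_measurable (interval_measure F)" using assms(2) borel_measurable_mono measurable_cong_sets[OF sets_interval_measure refl] by blast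
  show ?thesis
    unfolding Tu_def cdf_def
    by (subst measure_distr) (auto simp: um vimage_def)
qed

lemma Tu_M0:
  assumes "F \<in> M0" "mono u"
  shows "Tu u F \<in> M0"
proof -
  interpret real_distribution "interval_measure F" using M0_dist[OF assms(1)] by simp
  have um: "u \<in> borel_measurable (interval_measure F)" using assms(2) borel_measurable_mono measurable_cong_sets[OF sets_interval_measure refl] by blast
  have "real_distribution (distr (interval_measure F) borel u)"
    by (simp add: um real_distribution_distr)
  then show ?thesis using Tu_cdf[OF assms] cdf_M0 by simp
qed

lemma FD_D:
  assumes "d \<in> FD_hat"
  shows "\<And>x. x \<in> {0..1} \<Longrightarrow> 0 \<le> d x \<and> d x \<le> 1" "mono_on {0..1} d" "d 0 = 0" "d 1 = 1"
    "(d \<longlongrightarrow> 0) (at_right 0)" "(d \<longlongrightarrow> 1) (at_left 1)"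
  using assms by (auto simp: FD_hat_def)

lemma Td_tendsto:
  assumes d: "d \<in> FD_hat" "right_cont_on01 d" and F: "F \<in> M0"
  shows "((\<lambda>y. d (F y)) \<longlongrightarrow> d (F x)) (at_right x)"
proof (cases "F x < 1")
  case True
  have "0 \<le> F x" using M0_bounds[OF F] by simp
  then have "continuous (at_right (F x)) d" using d(2) True by (auto simp: right_cont_on01_def)
  then have c: "continuous (at (F x) within {F x..}) d" by (simp add: at_within_Ici_at_right)
  have ev: "eventually (\<lambda>y. F y \<in> {F x..}) (at_right x)"
    using M0_D(1)[OF F] by (auto simp: eventually_at_right_field mono_def intro!: exI[of _ "x+1"])
  have t: "(F \<longlongrightarrow> F x) (at_right x)" using M0_D(2)[OF F] by (simp add: continuous_within)
  show ?thesis by (rule continuous_within_tendsto_compose[OF c ev t])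
next
  case False
  then have Fx: "F x = 1" using M0_bounds[OF F, of x] by simp
  have "eventually (\<lambda>y. d (F y) = d (F x)) (at_right x)"
  proof -
    have "F y = 1" if "y > x" for y
      using M0_bounds[OF F, of y] monoD[OF M0_D(1)[OF F], of x y] that Fx by simp
    then show ?thesis using Fx by (auto simp: eventually_at_right_field intro!: exI[of _ "x+1"])
  qed
  then show ?thesis by (rule tendsto_eventually)
qed

lemma Td_eq:
  assumes "d \<in> FD_hat" "right_cont_on01 d" "F \<in> M0"
  shows "Td d F = (\<lambda>x. d (F x))"
  unfolding Td_def
proof
  fix x show "Lim (at_right x) (\<lambda>y. d (F y)) = d (F x)"
    using Td_tendsto[OF assms, of x] by (intro tendsto_Lim) auto
qed

lemma Td_M0:
  assumes d: "d \<in> FD_hat" "right_cont_on01 d" and F: "F \<in> M0"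
  shows "Td d F \<in> M0"
proof -
  have mono: "mono (\<lambda>x. d (F x))"
    using FD_D(2)[OF d(1)] M0_D(1)[OF F] M0_bounds[OF F]
    by (auto simp: mono_def mono_on_def)
  have rc: "continuous (at_right x) (\<lambda>x. d (F x))" for x
    using Td_tendsto[OF assms, of x] by (simp add: continuous_within)
  have c0: "continuous (at 0 within {0..}) d"
    using FD_D(3,5)[OF d(1)] by (simp add: at_within_Ici_at_right continuous_within)
  have bot: "((\<lambda>x. d (F x)) \<longlongrightarrow> 0) at_bot"
    using continuous_within_tendsto_compose'[OF c0, of F, OF _ M0_D(3)[OF F]] M0_bounds[OF F] FD_D(3)[OF d(1)]
    by simp
  have c1: "continuous (at 1 within {..1}) d"
    using FD_D(4,6)[OF d(1)] by (simp add: at_within_Iic_at_left continuous_within)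
  have top: "((\<lambda>x. d (F x)) \<longlongrightarrow> 1) at_top"
    using continuous_within_tendsto_compose'[OF c1, of F, OF _ M0_D(4)[OF F]] M0_bounds[OF F] FD_D(4)[OF d(1)]
    by simp
  show ?thesis using Td_eq[OF assms] mono rc bot top by (simp add: M0_def)
qed

lemma sublevel_cases:
  assumes u: "incr_left_cont u"
  shows "{y. u y \<le> x} = {} \<or> {y. u y \<le> x} = UNIV \<or> (\<exists>a. {y. u y \<le> x} = {..a})"
proof -
  let ?S = "{y. u y \<le> x}"
  have m: "mono u" and lc: "\<And>y. continuous (at_left y) u" using u by (auto simp: incr_left_cont_def)
  { assume ne: "?S \<noteq> {}" and nu: "?S \<noteq> UNIV"
    obtain z where z: "z \<notin> ?S" using nu by auto
    have bd: "\<forall>s\<in>?S. s \<le> z"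
    proof (intro ballI, rule ccontr)
      fix s assume "s \<in> ?S" "\<not> s \<le> z"
      then show False using z monoD[OF m, of z s] by auto
    qed
    then have bdd: "bdd_above ?S" by (auto simp: bdd_above_def)
    define a where "a = Sup ?S"
    have lt: "y \<in> ?S" if "y < a" for y
    proof -
      obtain s where "s \<in> ?S" "y < s" using \<open>y < a\<close> ne bdd by (auto simp: a_def less_cSup_iff)
      then show ?thesis using monoD[OF m, of y s] by auto
    qed
    have "u a \<le> x"
    proof -
      have "(u \<longlongrightarrow> u a) (at_left a)" using lc[of a] by (simp add: continuous_within)
      moreover have "eventually (\<lambda>y. u y \<le> x) (at_left a)"
        using lt by (auto simp: eventually_at_left_field intro!: exI[of _ "a - 1"])
      ultimately show ?thesis by (rule tendsto_upperbound) auto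
    qed
    have "?S = {..a}"
    proof (intro set_eqI iffI)
      fix y assume "y \<in> ?S" then show "y \<in> {..a}" using bdd cSup_upper[of y ?S] by (simp add: a_def)
    next
      fix y assume "y \<in> {..a}"
      then have "y < a \<or> y = a" by auto
      then show "y \<in> ?S" using lt \<open>u a \<le> x\<close> by auto
    qed
    then have "\<exists>a. ?S = {..a}" by blast }
  then show ?thesis by blast
qed

lemma measure_M0_cases:
  assumes "F \<in> M0"
  shows "measure (interval_measure F) {} = 0" "measure (interval_measure F) UNIV = 1"
    "measure (interval_measure F) {..a} = F a"
proof -
  interpret real_distribution "interval_measure F" using M0_dist[OF assms(1)] by simp
  show "measure (interval_measure F) {} = 0" by simp
  show "measure (interval_measure F) UNIV = 1" using prob_space by simp
  show "measure (interval_measure F) {..a} = F a" using M0_dist[OF assms] by simp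
qed

lemma commute:
  assumes d: "d \<in> FD_hat" "right_cont_on01 d" and u: "incr_left_cont u" and F: "F \<in> M0"
  shows "Td d (Tu u F) = Tu u (Td d F)"
proof -
  have mu: "mono u" using u by (simp add: incr_left_cont_def)
  have TF: "Tu u F \<in> M0" using Tu_M0[OF F mu] .
  have dF: "Td d F \<in> M0" using Td_M0[OF d F] .
  show ?thesis
  proof
    fix x
    have "Td d (Tu u F) x = d (measure (interval_measure F) {y. u y \<le> x})"
      using Td_eq[OF d TF] by (simp add: Tu_def)
    also have "\<dots> = measure (interval_measure (Td d F)) {y. u y \<le> x}"
      using sublevel_cases[OF u, of x] measure_M0_cases[OF F] measure_M0_cases[OF dF]
        FD_D(3,4)[OF d(1)] Td_eq[OF d F]
      by auto
    finally show "Td d (Tu u F) x = Tu u (Td d F) x" by (simp add: Tu_def)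
  qed
qed


definition G :: "real \<Rightarrow> real" where "G x = 1/2 + arctan x / pi"
definition Ginv :: "real \<Rightarrow> real" where "Ginv t = tan (pi * (t - 1/2))"

lemma G_bounds: "0 < G x" "G x < 1"
  using arctan_bounded[of x] pi_gt_zero by (auto simp: G_def field_simps)

lemma G_less: "x < y \<Longrightarrow> G x < G y"
  using pi_gt_zero by (auto simp: G_def divide_strict_right_mono arctan_less_iff)

lemma G_le_iff: "G x \<le> G y \<longleftrightarrow> x \<le> y"
  by (metis G_less linorder_not_le order.order_iff_strict)

lemma G_Ginv: assumes "0 < t" "t < 1" shows "G (Ginv t) = t"
proof -
  have "- (pi/2) < pi * (t - 1/2)" "pi * (t - 1/2) < pi/2" using assms pi_gt_zero by (auto simp: field_simps)
  then have "arctan (tan (pi * (t - 1/2))) = pi * (t - 1/2)" by (simp add: arctan_tan)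
  then show ?thesis using pi_gt_zero by (simp add: G_def Ginv_def field_simps)
qed

lemma Ginv_G: "Ginv (G x) = x"
  using pi_gt_zero by (simp add: G_def Ginv_def field_simps tan_arctan)

lemma Ginv_less: "0 < s \<Longrightarrow> t < 1 \<Longrightarrow> s < t \<Longrightarrow> Ginv s < Ginv t"
  by (metis G_Ginv G_le_iff dual_order.strict_trans leD leI)

lemma isCont_Ginv: assumes "0 < t" "t < 1" shows "isCont Ginv t"
proof -
  have "- (pi/2) < pi * (t - 1/2)" "pi * (t - 1/2) < pi/2" using assms pi_gt_zero by (auto simp: field_simps)
  then have "cos (pi * (t - 1/2)) \<noteq> 0" using cos_gt_zero_pi by fastforce
  then show ?thesis unfolding Ginv_def by (intro continuous_intros) auto
qed

lemma cont_G: "continuous_on UNIV G"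
  unfolding G_def by (intro continuous_intros) auto

lemma G_M0: "G \<in> M0"
proof -
  have "mono G" using G_less by (auto simp: mono_def less_eq_real_def)
  moreover have "continuous (at_right x) G" for x
    using cont_G by (simp add: continuous_on_eq_continuous_within continuous_at_imp_continuous_at_within)
  moreover have "(G \<longlongrightarrow> 0) at_bot"
  proof -
    have "((\<lambda>x. 1/2 + arctan x / pi) \<longlongrightarrow> 1/2 + (-(pi/2)) / pi) at_bot"
      by (intro tendsto_intros tendsto_arctan_at_bot) auto
    then show ?thesis using pi_gt_zero by (simp add: G_def[abs_def])
  qed
  moreover have "(G \<longlongrightarrow> 1) at_top"
  proof -
    have "((\<lambda>x. 1/2 + arctan x / pi) \<longlongrightarrow> 1/2 + (pi/2) / pi) at_top"
      by (intro tendsto_intros tendsto_arctan_at_top) auto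
    then show ?thesis using pi_gt_zero by (simp add: G_def[abs_def])
  qed
  ultimately show ?thesis by (simp add: M0_def)
qed


definition qF :: "(real \<Rightarrow> real) \<Rightarrow> real \<Rightarrow> real" where
  "qF F t = Inf {x. t \<le> F x}"

lemma qF_galois:
  assumes F: "F \<in> M0" and t: "0 < t" "t < 1"
  shows "qF F t \<le> x \<longleftrightarrow> t \<le> F x"
proof -
  let ?A = "{x. t \<le> F x}"
  have m: "mono F" using M0_D[OF F] by simp
  have "eventually (\<lambda>x. F x > t) at_top"
    using M0_D(4)[OF F] t by (simp add: order_tendsto_iff)
  then obtain x0 where "F x0 > t" by (auto simp: eventually_at_top_linorder)
  then have ne: "?A \<noteq> {}" by (auto intro!: exI[of _ x0])
  have "eventually (\<lambda>x. F x < t) at_bot"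
    using M0_D(3)[OF F] t by (simp add: order_tendsto_iff)
  then obtain b where b: "\<And>x. x \<le> b \<Longrightarrow> F x < t" by (auto simp: eventually_at_bot_linorder)
  have bdd: "bdd_below ?A"
    unfolding bdd_below_def
  proof (rule exI[of _ b], intro ballI)
    fix x assume "x \<in> ?A"
    then show "b \<le> x" using b[of x] by (cases "x \<le> b") auto
  qed
  have inA: "t \<le> F (qF F t)"
  proof -
    let ?m = "qF F t"
    have "(F \<longlongrightarrow> F ?m) (at_right ?m)" using M0_D(2)[OF F] by (simp add: continuous_within)
    moreover have "eventually (\<lambda>y. t \<le> F y) (at_right ?m)"
    proof -
      have "t \<le> F y" if "y > ?m" for y
      proof -
        have "\<exists>a\<in>?A. a < y" using that ne bdd by (simp add: qF_def cInf_less_iff)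
        then obtain a where "a \<in> ?A" "a < y" by blast
        then show ?thesis using monoD[OF m, of a y] by auto
      qed
      then show ?thesis by (auto simp: eventually_at_right_field intro!: exI[of _ "?m + 1"])
    qed
    ultimately show ?thesis by (rule tendsto_lowerbound) auto
  qed
  show ?thesis
  proof
    assume "qF F t \<le> x" then show "t \<le> F x" using inA monoD[OF m, of "qF F t" x] by simp
  next
    assume "t \<le> F x" then show "qF F t \<le> x" unfolding qF_def using bdd by (intro cInf_lower) auto
  qed
qed

lemma left_cont_closed:
  fixes u :: "real \<Rightarrow> real"
  assumes m: "mono u" and cl: "\<And>x. closed {y. u y \<le> x}"
  shows "continuous (at_left y) u"
  unfolding continuous_within
proof (rule order_tendstoI)
  fix a assume "u y < a"
  then show "eventually (\<lambda>z. u z < a) (at_left y)"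
  proof -
    have "u z < a" if "z < y" for z using monoD[OF m, of z y] that \<open>u y < a\<close> by simp
    then show ?thesis by (auto simp: eventually_at_left_field intro!: exI[of _ "y - 1"])
  qed
next
  fix a assume a: "a < u y"
  have "\<exists>z<y. a < u z"
  proof (rule ccontr)
    assume "\<not> ?thesis"
    then have "{..<y} \<subseteq> {z. u z \<le> a}" by (auto simp: not_less) (meson not_le)
    then have "closure {..<y} \<subseteq> {z. u z \<le> a}" using cl by (rule closure_minimal)
    then have "u y \<le> a" by (auto simp: closure_lessThan)
    then show False using a by simp
  qed
  then obtain z where "z < y" "a < u z" by auto
  then show "eventually (\<lambda>z. a < u z) (at_left y)"
    using monoD[OF m] by (auto simp: eventually_at_left_field intro!: exI[of _ z] intro: less_le_trans)
qed

lemma quantile_rep: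
  assumes F: "F \<in> M0"
  shows "\<exists>u. incr_left_cont u \<and> Tu u G = F"
proof -
  define u where "u y = qF F (G y)" for y
  have gal: "u y \<le> x \<longleftrightarrow> G y \<le> F x" for x y
    unfolding u_def using qF_galois[OF F G_bounds] .
  have mu: "mono u"
  proof
    fix y y' :: real assume "y \<le> y'"
    then have "G y \<le> G y'" by (simp add: G_le_iff)
    also have "G y' \<le> F (u y')" using gal[of y' "u y'"] by simp
    finally show "u y \<le> u y'" using gal by simp
  qed
  have cl: "closed {y. u y \<le> x}" for x
  proof -
    have "{y. u y \<le> x} = {y. G y \<le> F x}" using gal by auto
    moreover have "closed {y. G y \<le> F x}"
      by (rule closed_Collect_le[OF cont_G continuous_on_const])
    ultimately show ?thesis by simp
  qed
  have ilc: "incr_left_cont u"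
    unfolding incr_left_cont_def using mu left_cont_closed[OF mu cl] by blast
  have "Tu u G x = F x" for x
  proof -
    have eq: "Tu u G x = measure (interval_measure G) {y. G y \<le> F x}"
      unfolding Tu_def using gal by simp
    show ?thesis
    proof (cases "F x \<le> 0")
      case True
      have "F x < G y" for y using G_bounds(1)[of y] True by linarith
      then have "{y. G y \<le> F x} = {}" by (auto simp: not_le[symmetric])
      then show ?thesis using eq measure_M0_cases[OF G_M0] True M0_bounds[OF F, of x] by simp
    next
      case False
      show ?thesis
      proof (cases "1 \<le> F x")
        case True
        then have "{y. G y \<le> F x} = UNIV" using G_bounds by (auto intro: less_imp_le less_le_trans)
        then show ?thesis using eq measure_M0_cases[OF G_M0] True M0_bounds[OF F, of x] by simp
      next
        case False2: False
        then have "{y. G y \<le> F x} = {..Ginv (F x)}"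
        proof -
          have "G y \<le> F x \<longleftrightarrow> y \<le> Ginv (F x)" for y
            using G_le_iff[of y "Ginv (F x)"] G_Ginv[of "F x"] False False2 by simp
          then show ?thesis by auto
        qed
        then show ?thesis using eq measure_M0_cases[OF G_M0] G_Ginv[of "F x"] False False2 by simp
      qed
    qed
  qed
  then show ?thesis using ilc by blast
qed


lemma distortion_rep:
  assumes F: "F \<in> M0"
  shows "\<exists>d\<in>FD_hat. right_cont_on01 d \<and> Td d G = F"
proof -
  define d where "d t = (if t \<le> 0 then 0 else if 1 \<le> t then 1 else F (Ginv t))" for t
  have mF: "mono F" using M0_D[OF F] by simp
  have vals: "0 \<le> d t \<and> d t \<le> 1" for t using M0_bounds[OF F] by (simp add: d_def)
  have mon: "mono_on {0..1} d"
  proof (rule mono_onI)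
    fix s t :: real assume st: "s \<in> {0..1}" "t \<in> {0..1}" "s \<le> t"
    show "d s \<le> d t"
    proof (cases "s \<le> 0 \<or> 1 \<le> t")
      case True then show ?thesis using vals[of s] vals[of t] st by (auto simp: d_def)
    next
      case False
      then have "Ginv s \<le> Ginv t" using Ginv_less[of s t] st by (cases "s = t") auto
      then show ?thesis using False st monoD[OF mF] by (auto simp: d_def)
    qed
  qed
  have lim0: "(d \<longlongrightarrow> 0) (at_right 0)"
  proof (rule order_tendstoI)
    fix a :: real assume "a < 0" then show "eventually (\<lambda>s. a < d s) (at_right 0)"
      using vals by (auto intro: always_eventually less_le_trans)
  next
    fix a :: real assume a: "0 < a"
    have "eventually (\<lambda>x. F x < a) at_bot" using M0_D(3)[OF F] a by (simp add: order_tendsto_iff)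
    then obtain b where b: "\<And>x. x \<le> b \<Longrightarrow> F x < a" by (auto simp: eventually_at_bot_linorder)
    have "d s < a" if "0 < s" "s < G b" for s
    proof (cases "1 \<le> s")
      case True then show ?thesis using G_bounds(2)[of b] that by simp
    next
      case False
      have "Ginv s < b" using G_le_iff[of b "Ginv s"] G_Ginv[of s] that False by linarith
      then show ?thesis using b[of "Ginv s"] that False by (simp add: d_def)
    qed
    then show "eventually (\<lambda>s. d s < a) (at_right 0)"
      using G_bounds(1)[of b] by (auto simp: eventually_at_right_field intro!: exI[of _ "G b"])
  qed
  have lim1: "(d \<longlongrightarrow> 1) (at_left 1)"
  proof (rule order_tendstoI)
    fix a :: real assume "1 < a" then show "eventually (\<lambda>s. d s < a) (at_left 1)"
      using vals by (auto intro: always_eventually le_less_trans)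
  next
    fix a :: real assume a: "a < 1"
    have "eventually (\<lambda>x. a < F x) at_top" using M0_D(4)[OF F] a by (simp add: order_tendsto_iff)
    then obtain b where b: "\<And>x. b \<le> x \<Longrightarrow> a < F x" by (auto simp: eventually_at_top_linorder)
    have "a < d s" if "G b < s" "s < 1" for s
    proof (cases "s \<le> 0")
      case True then show ?thesis using G_bounds(1)[of b] that by simp
    next
      case False
      have "b < Ginv s" using G_le_iff[of "Ginv s" b] G_Ginv[of s] that False by linarith
      then show ?thesis using b[of "Ginv s"] that False by (simp add: d_def)
    qed
    then show "eventually (\<lambda>s. a < d s) (at_left 1)"
      using G_bounds(2)[of b] by (auto simp: eventually_at_left_field intro!: exI[of _ "G b"])
  qed
  have d0: "d 0 = 0" and d1: "d 1 = 1" by (simp_all add: d_def)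
  have FD: "d \<in> FD_hat" unfolding FD_hat_def using vals mon lim0 lim1 d0 d1 by auto
  have rc: "right_cont_on01 d"
    unfolding right_cont_on01_def
  proof
    fix t :: real assume t: "t \<in> {0..<1}"
    show "continuous (at_right t) d"
    proof (cases "t = 0")
      case True then show ?thesis using lim0 d0 by (simp add: continuous_within)
    next
      case False
      then have t': "0 < t" "t < 1" using t by auto
      have c: "continuous (at (Ginv t) within {Ginv t<..}) F" using M0_D(2)[OF F] by simp
      have ev: "eventually (\<lambda>s. Ginv s \<in> {Ginv t<..}) (at_right t)"
        using Ginv_less[of t] t' by (auto simp: eventually_at_right_field intro!: exI[of _ 1])
      have tl: "(Ginv \<longlongrightarrow> Ginv t) (at_right t)"
        using isCont_Ginv[OF t'] by (simp add: isCont_def filterlim_at_split)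
      have "((\<lambda>s. F (Ginv s)) \<longlongrightarrow> F (Ginv t)) (at_right t)"
        by (rule continuous_within_tendsto_compose[OF c ev tl])
      moreover have "eventually (\<lambda>s. F (Ginv s) = d s) (at_right t)"
        using t' by (auto simp: d_def eventually_at_right_field intro!: exI[of _ 1])
      ultimately have "(d \<longlongrightarrow> F (Ginv t)) (at_right t)" by (rule Lim_transform_eventually)
      then show ?thesis using t' by (simp add: continuous_within d_def)
    qed
  qed
  have "Td d G = F"
    using Td_eq[OF FD rc G_M0] G_bounds by (simp add: d_def Ginv_G not_le[symmetric])
  then show ?thesis using FD rc by blast
qed

theorem proposition5:
  fixes T :: "(real \<Rightarrow> real) \<Rightarrow> (real \<Rightarrow> real)"
  assumes "\<forall>F\<in>M0. T F \<in> M0"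
  shows "((\<forall>u. incr_left_cont u \<longrightarrow> (\<forall>F\<in>M0. T (Tu u F) = Tu u (T F)))
           \<longleftrightarrow> (\<exists>d\<in>FD_hat. right_cont_on01 d \<and> (\<forall>F\<in>M0. T F = Td d F)))
     \<and> ((\<forall>d\<in>FD_hat. right_cont_on01 d \<longrightarrow> (\<forall>F\<in>M0. T (Td d F) = Td d (T F)))
           \<longleftrightarrow> (\<exists>u. incr_left_cont u \<and> (\<forall>F\<in>M0. T F = Tu u F)))"
proof (intro conjI iffI)
  assume h: "\<forall>u. incr_left_cont u \<longrightarrow> (\<forall>F\<in>M0. T (Tu u F) = Tu u (T F))"
  obtain d where d: "d \<in> FD_hat" "right_cont_on01 d" "Td d G = T G"
    using distortion_rep[of "T G"] assms G_M0 by blast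
  have "T F = Td d F" if F: "F \<in> M0" for F
  proof -
    obtain u where u: "incr_left_cont u" "Tu u G = F" using quantile_rep[OF F] by blast
    have "T F = T (Tu u G)" using u by simp
    also have "\<dots> = Tu u (T G)" using h u G_M0 by blast
    also have "\<dots> = Tu u (Td d G)" using d by simp
    also have "\<dots> = Td d (Tu u G)" using commute[OF d(1,2) u(1) G_M0] by simp
    finally show ?thesis using u by simp
  qed
  then show "\<exists>d\<in>FD_hat. right_cont_on01 d \<and> (\<forall>F\<in>M0. T F = Td d F)" using d by blast
next
  assume "\<exists>d\<in>FD_hat. right_cont_on01 d \<and> (\<forall>F\<in>M0. T F = Td d F)"
  then obtain d where d: "d \<in> FD_hat" "right_cont_on01 d" "\<forall>F\<in>M0. T F = Td d F" by blast
  show "\<forall>u. incr_left_cont u \<longrightarrow> (\<forall>F\<in>M0. T (Tu u F) = Tu u (T F))"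
  proof (intro allI impI ballI)
    fix u F assume u: "incr_left_cont u" and F: "F \<in> M0"
    have "Tu u F \<in> M0" using Tu_M0[OF F] u by (simp add: incr_left_cont_def)
    then show "T (Tu u F) = Tu u (T F)" using d F commute[OF d(1,2) u F] by simp
  qed
next
  assume h: "\<forall>d\<in>FD_hat. right_cont_on01 d \<longrightarrow> (\<forall>F\<in>M0. T (Td d F) = Td d (T F))"
  obtain u where u: "incr_left_cont u" "Tu u G = T G"
    using quantile_rep[of "T G"] assms G_M0 by blast
  have "T F = Tu u F" if F: "F \<in> M0" for F
  proof -
    obtain d where d: "d \<in> FD_hat" "right_cont_on01 d" "Td d G = F" using distortion_rep[OF F] by blast
    have "T F = T (Td d G)" using d by simp
    also have "\<dots> = Td d (T G)" using h d G_M0 by blast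
    also have "\<dots> = Td d (Tu u G)" using u by simp
    also have "\<dots> = Tu u (Td d G)" using commute[OF d(1,2) u(1) G_M0] by simp
    finally show ?thesis using d by simp
  qed
  then show "\<exists>u. incr_left_cont u \<and> (\<forall>F\<in>M0. T F = Tu u F)" using u by blast
next
  assume "\<exists>u. incr_left_cont u \<and> (\<forall>F\<in>M0. T F = Tu u F)"
  then obtain u where u: "incr_left_cont u" "\<forall>F\<in>M0. T F = Tu u F" by blast
  show "\<forall>d\<in>FD_hat. right_cont_on01 d \<longrightarrow> (\<forall>F\<in>M0. T (Td d F) = Td d (T F))"
  proof (intro ballI impI)
    fix d F assume d: "d \<in> FD_hat" "right_cont_on01 d" and F: "F \<in> M0"
    have "Td d F \<in> M0" using Td_M0[OF d F] .
    then show "T (Td d F) = Td d (T F)" using u F commute[OF d u(1) F] by simp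
  qed
qed

end
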